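(* In the setting below, let $\phi_1:=\phi/\|\phi\|$ with $\|\phi\|=\sqrt{|\gamma(\phi,\phi)|}$ be the unitary section of $\mathcal U^M$ obtained from $\phi$. Then the connection one-form $i_\epsilon\sum A_idz^i+i_\epsilon\sum A_{\bar i}d\bar z^i$ of the pull back connection on $\mathcal U^M$ with respect to $\phi_1$ (i.e. $\mathcal D_i\phi_1=i_\epsilon A_i\phi_1$, $\mathcal D_{\bar i}\phi_1=i_\epsilon A_{\bar i}\phi_1$) is given by $$A_i=\tfrac12A^h_i,\qquad A_{\bar i}=\tfrac12\overline{A^h_i},$$ where $i_\epsilon A^h_i=\gamma(\partial_i\phi,\phi)/\gamma(\phi,\phi)$.
   Context: Let $\epsilon\in\{-1,1\}$, $\mathbb{C}_\epsilon=\mathbb{R}[i_\epsilon]$, $i_\epsilon^2=\epsilon$, conjugation $\overline{a+i_\epsilon b}=a-i_\epsilon b$. $V=\mathbb{C}_\epsilon^{2n+2}$ with coordinates $(z^i,w_i)$, $\Omega=\sum dz^i\wedge dw_i$, $\gamma=i_\epsilon\Omega(\cdot,\bar\cdot)$ ($\epsilon$-Hermitian); $V'=\{\gamma(v,v)\neq0\}$; $P(V')$ the set of lines $\mathbb{C}_\epsilon v$, $v\in V'$; $\pi_V:V'\to P(V')$; $\mathcal U\subset P(V')\times V$ the universal line bundle with Chern connection $\mathcal D_Xv=$ $\gamma$-orthogonal projection onto $\mathcal U$ of $d_Xv$. Setting: $(M,J,g,\nabla,\xi)$ is a regular conical affine special $\epsilon$-K\"ahler manifold of real dimension $2n+2$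 (an $\epsilon$-K\"ahler manifold with parallel $g$-skew $J$, $J^2=\epsilon\mathrm{Id}$, flat torsion-free $\nabla$ with $\nabla\omega=0$ for $\omega=\epsilon g(J\cdot,\cdot)$ and $(\nabla_XJ)Y=(\nabla_YJ)X$, and a vector field $\xi$ with $\nabla\xi=D\xi=\mathrm{Id}$ for the Levi-Civita connection $D$; regular: $g(\xi,\xi)$ nowhere zero and the leaf space of $\mathrm{span}\{\xi,J\xi\}$ is a Hausdorff $\epsilon$-complex manifold onto which the quotient is a holomorphic submersion). $\phi:M\to V'$ is a conical $\epsilon$-K\"ahlerian Lagrangian holomorphic immersion inducing the special geometry (i.e. $\phi^*\gamma$ nondegenerate, $\phi^*\Omega=0$, position vector field of $V$ tangent along $\phi$, $g=\phi^*\mathrm{Re}\gamma$), regarded as a holomorphic section of $\mathcal U^M=(\pi_V\circ\phi)^*\mathcal U$ with the pull back connection $\mathcal D$ (defined by $(f^*\mathcal D)_Xf^*s=\mathcal D_{dfX}s$). $(z^i)$ are conical special holomorphic coordinates $z^i\circ\phi$, $\partial_i=\partial/\partial z^i$, $\partial_{\bar i}=\partial/\partial\bar z^i$, $\mathcal D_i=\mathcal D_{\partial_i}$, $\mathcal D_{\bar i}=\mathcal D_{\partial_{\bar i}}$. *)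

theory Defs
  imports "HOL-Analysis.Analysis"
begin

text \<open>The epsilon-complex numbers C_eps = R[i_eps], i_eps^2 = eps, represented as real pairs
  (a,b) standing for a + i_eps b.  The parameter e is eps.\<close>

type_synonym ec = "real \<times> real"

definition emul :: "real \<Rightarrow> ec \<Rightarrow> ec \<Rightarrow> ec" where
  "emul e x y = (fst x * fst y + e * snd x * snd y, fst x * snd y + snd x * fst y)"

definition ei :: ec where "ei = (0, 1)"

definition econj :: "ec \<Rightarrow> ec" where "econj x = (fst x, - snd x)"

definition einv :: "real \<Rightarrow> ec \<Rightarrow> ec" where
  "einv e x = (fst x / ((fst x)\<^sup>2 - e * (snd x)\<^sup>2), - snd x / ((fst x)\<^sup>2 - e * (snd x)\<^sup>2))"

definition ediv :: "real \<Rightarrow> ec \<Rightarrow> ec \<Rightarrow> ec" where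
  "ediv e x y = emul e x (einv e y)"

text \<open>C_eps-scalar multiplication on C_eps^('n) and on V = C_eps^('n) x C_eps^('n)
  (coordinates (z^i, w_i)), 'n an index type with CARD('n) = n+1.\<close>

definition escN :: "real \<Rightarrow> ec \<Rightarrow> ec^'n \<Rightarrow> ec^'n" where
  "escN e c v = (\<chi> j. emul e c (v $ j))"

definition escV :: "real \<Rightarrow> ec \<Rightarrow> ((ec^'n) \<times> (ec^'n)) \<Rightarrow> ((ec^'n) \<times> (ec^'n))" where
  "escV e c v = (escN e c (fst v), escN e c (snd v))"

definition conjV :: "((ec^'n) \<times> (ec^'n)) \<Rightarrow> ((ec^'n) \<times> (ec^'n))" where
  "conjV v = ((\<chi> j. econj (fst v $ j)), (\<chi> j. econj (snd v $ j)))"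

definition Omega :: "real \<Rightarrow> ((ec^'n) \<times> (ec^'n)) \<Rightarrow> ((ec^'n) \<times> (ec^'n)) \<Rightarrow> ec" where
  "Omega e u v = (\<Sum>j\<in>UNIV. emul e (fst u $ j) (snd v $ j) - emul e (snd u $ j) (fst v $ j))"

definition gam :: "real \<Rightarrow> ((ec^'n) \<times> (ec^'n)) \<Rightarrow> ((ec^'n) \<times> (ec^'n)) \<Rightarrow> ec" where
  "gam e u v = emul e ei (Omega e u (conjV v))"

text \<open>Wirtinger-type derivatives d/dz^i = 1/2 (d/dx^i + eps i_eps d/dy^i) and
  d/dzbar^i = 1/2 (d/dx^i - eps i_eps d/dy^i), where z^i = x^i + i_eps y^i.\<close>

definition dz :: "real \<Rightarrow> 'n \<Rightarrow> (ec^'n \<Rightarrow> (ec^'n) \<times> (ec^'n)) \<Rightarrow> ec^'n \<Rightarrow> (ec^'n) \<times> (ec^'n)" where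
  "dz e i f p = (1/2) *\<^sub>R (frechet_derivative f (at p) (axis i (1, 0))
       + escV e (0, e) (frechet_derivative f (at p) (axis i (0, 1))))"

definition dzbar :: "real \<Rightarrow> 'n \<Rightarrow> (ec^'n \<Rightarrow> (ec^'n) \<times> (ec^'n)) \<Rightarrow> ec^'n \<Rightarrow> (ec^'n) \<times> (ec^'n)" where
  "dzbar e i f p = (1/2) *\<^sub>R (frechet_derivative f (at p) (axis i (1, 0))
       - escV e (0, e) (frechet_derivative f (at p) (axis i (0, 1))))"

definition gproj :: "real \<Rightarrow> ((ec^'n) \<times> (ec^'n)) \<Rightarrow> ((ec^'n) \<times> (ec^'n)) \<Rightarrow> ((ec^'n) \<times> (ec^'n))" where
  "gproj e v u = escV e (ediv e (gam e u v) (gam e v v)) v"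

text \<open>Pull-back Chern connection on U^M, for a section s of U^M (s p in the line C_eps phi(p)),
  in direction d/dz^i resp. d/dzbar^i.\<close>

definition covD :: "real \<Rightarrow> (ec^'n \<Rightarrow> (ec^'n) \<times> (ec^'n)) \<Rightarrow> 'n \<Rightarrow> (ec^'n \<Rightarrow> (ec^'n) \<times> (ec^'n)) \<Rightarrow> ec^'n \<Rightarrow> (ec^'n) \<times> (ec^'n)" where
  "covD e phi i s p = gproj e (phi p) (dz e i s p)"

definition covDbar :: "real \<Rightarrow> (ec^'n \<Rightarrow> (ec^'n) \<times> (ec^'n)) \<Rightarrow> 'n \<Rightarrow> (ec^'n \<Rightarrow> (ec^'n) \<times> (ec^'n)) \<Rightarrow> ec^'n \<Rightarrow> (ec^'n) \<times> (ec^'n)" where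
  "covDbar e phi i s p = gproj e (phi p) (dzbar e i s p)"

definition gnorm :: "real \<Rightarrow> ((ec^'n) \<times> (ec^'n)) \<Rightarrow> real" where
  "gnorm e v = sqrt \<bar>fst (gam e v v)\<bar>"

definition unitsec :: "real \<Rightarrow> (ec^'n \<Rightarrow> (ec^'n) \<times> (ec^'n)) \<Rightarrow> ec^'n \<Rightarrow> (ec^'n) \<times> (ec^'n)" where
  "unitsec e phi p = (1 / gnorm e (phi p)) *\<^sub>R phi p"

text \<open>Local model of a conical eps-Kaehlerian Lagrangian holomorphic immersion, written in the
  conical special holomorphic coordinates z^i = z^i o phi on an open domain U.\<close>

definition conical_lagr_immersion ::
  "real \<Rightarrow> (ec^'n) set \<Rightarrow> (ec^'n \<Rightarrow> (ec^'n) \<times> (ec^'n)) \<Rightarrow> bool" where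
  "conical_lagr_immersion e U phi \<longleftrightarrow> open U \<and>
     (\<forall>p\<in>U. fst (phi p) = p \<and> gam e (phi p) (phi p) \<noteq> 0 \<and>
       (\<exists>L. (phi has_derivative L) (at p) \<and>
            (\<forall>v. L (escN e ei v) = escV e ei (L v)) \<and>
            inj L \<and>
            phi p \<in> range L \<and>
            (\<forall>v w. Omega e (L v) (L w) = 0) \<and>
            (\<forall>v. v \<noteq> 0 \<longrightarrow> (\<exists>w. fst (gam e (L v) (L w)) \<noteq> 0))))"

end

theory Submission imports Defs begin
lemma emul_sum_right: "emul e c (sum f A) = (\<Sum>j\<in>A. emul e c (f j))"
  by (simp add: emul_def prod_eq_iff fst_sum snd_sum sum_distrib_left sum.distrib algebra_simps)

lemma econj_sum: "econj (sum f A) = (\<Sum>j\<in>A. econj (f j))"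
  by (simp add: econj_def prod_eq_iff fst_sum snd_sum sum_negf)

lemma Omega_scale_left: "Omega e (escV e c u) v = emul e c (Omega e u v)"
  unfolding Omega_def
  by (subst emul_sum_right) (auto intro!: sum.cong simp: escV_def escN_def emul_def algebra_simps)

lemma Omega_swap: "Omega e u v = - Omega e v u"
  unfolding Omega_def
  by (subst sum_negf[symmetric]) (auto intro!: sum.cong simp: emul_def algebra_simps)

lemma Omega_add_left: "Omega e (u + w) v = Omega e u v + Omega e w v"
  unfolding Omega_def
  by (subst sum.distrib[symmetric]) (auto intro!: sum.cong simp: emul_def algebra_simps)

lemma Omega_scaleR_left: "Omega e (r *\<^sub>R u) v = r *\<^sub>R Omega e u v"
  unfolding Omega_def
  by (subst scaleR_sum_right) (auto intro!: sum.cong simp: emul_def algebra_simps)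

lemma Omega_conj: "econj (Omega e u v) = Omega e (conjV u) (conjV v)"
  unfolding Omega_def
  by (subst econj_sum) (auto intro!: sum.cong simp: econj_def conjV_def emul_def algebra_simps)

lemma conjV_add: "conjV (u + v) = conjV u + conjV v"
  by (auto simp: conjV_def econj_def vec_eq_iff prod_eq_iff)
lemma conjV_scaleR: "conjV (r *\<^sub>R u) = r *\<^sub>R conjV u"
  by (auto simp: conjV_def econj_def vec_eq_iff prod_eq_iff)
lemma conjV_escV: "conjV (escV e c u) = escV e (econj c) (conjV u)"
  by (auto simp: conjV_def econj_def escV_def escN_def emul_def vec_eq_iff prod_eq_iff)
lemma conjV_conjV: "conjV (conjV u) = u"
  by (auto simp: conjV_def econj_def vec_eq_iff prod_eq_iff)

lemma gam_add_left: "gam e (u + w) v = gam e u v + gam e w v"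
  by (simp add: gam_def Omega_add_left emul_def algebra_simps)
lemma gam_scaleR_left: "gam e (r *\<^sub>R u) v = r *\<^sub>R gam e u v"
  by (simp add: gam_def Omega_scaleR_left emul_def algebra_simps)
lemma gam_add_right: "gam e u (v + w) = gam e u v + gam e u w"
  by (simp add: gam_def conjV_add Omega_swap[of e u] Omega_add_left emul_def algebra_simps)
lemma gam_scaleR_right: "gam e u (r *\<^sub>R v) = r *\<^sub>R gam e u v"
  by (simp add: gam_def conjV_scaleR Omega_swap[of e u] Omega_scaleR_left emul_def algebra_simps)
lemma gam_diff_left: "gam e (u - w) v = gam e u v - gam e w v"
proof -
  have "u - w = u + (-1) *\<^sub>R w" by simp
  then show ?thesis by (simp only: gam_add_left gam_scaleR_left) simp
qed
lemma gam_escV_left: "gam e (escV e c u) v = emul e c (gam e u v)"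
  by (simp add: gam_def Omega_scale_left emul_def algebra_simps)
lemma gam_herm: "gam e v u = econj (gam e u v)"
proof -
  have "econj (gam e u v) = econj (emul e ei (Omega e u (conjV v)))" by (simp add: gam_def)
  also have "\<dots> = emul e (econj ei) (econj (Omega e u (conjV v)))"
    by (simp add: emul_def econj_def)
  also have "econj (Omega e u (conjV v)) = Omega e (conjV u) v"
    by (simp add: Omega_conj conjV_conjV)
  also have "Omega e (conjV u) v = - Omega e v (conjV u)" by (rule Omega_swap)
  finally show ?thesis by (auto simp: gam_def emul_def econj_def ei_def)
qed

lemma bilinear_gam: "bilinear (gam e)"
  unfolding bilinear_def
  apply (intro conjI allI linearI)
     apply (rule gam_add_right)
    apply (rule gam_scaleR_right)
   apply (rule gam_add_left)
  apply (rule gam_scaleR_left)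
  done

lemma bb_gam: "bounded_bilinear (gam e)"
  using bilinear_gam bilinear_conv_bounded_bilinear by blast

lemma escV_add: "escV e c (u + v) = escV e c u + escV e c v"
  by (auto simp: escV_def escN_def emul_def vec_eq_iff prod_eq_iff algebra_simps)
lemma escV_scaleR: "escV e c (r *\<^sub>R u) = r *\<^sub>R escV e c u"
  by (auto simp: escV_def escN_def emul_def vec_eq_iff prod_eq_iff algebra_simps)
lemma escV_diff: "escV e c (u - v) = escV e c u - escV e c v"
  by (auto simp: escV_def escN_def emul_def vec_eq_iff prod_eq_iff algebra_simps)
lemma escV_escV: "escV e c (escV e d u) = escV e (emul e c d) u"
  by (auto simp: escV_def escN_def emul_def vec_eq_iff prod_eq_iff algebra_simps)

lemma kder: fixes x0::real assumes "x0 \<noteq> 0"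
  shows "((\<lambda>x. 1 / sqrt \<bar>x\<bar>) has_real_derivative (- (1/sqrt \<bar>x0\<bar>) / (2*x0))) (at x0)"
proof (cases "x0 > 0")
  case True
  have "((\<lambda>x. 1 / sqrt x) has_real_derivative (- (1/sqrt \<bar>x0\<bar>) / (2*x0))) (at x0)"
    using True
    by (auto intro!: derivative_eq_intros simp: field_simps) 
  then show ?thesis
    apply (rule has_field_derivative_transform_within_open[where S="{0<..}"]) using True by auto
next
  case False
  then have n: "x0 < 0" using assms by auto
  have "((\<lambda>x. 1 / sqrt (-x)) has_real_derivative (- (1/sqrt \<bar>x0\<bar>) / (2*x0))) (at x0)"
    using n
    by (auto intro!: derivative_eq_intros simp: field_simps) 
  then show ?thesis
    apply (rule has_field_derivative_transform_within_open[where S="{..<0}"]) using n by auto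
qed

theorem mainTheorem9:
  fixes e :: real and U :: "(ec^'n) set" and phi :: "ec^'n \<Rightarrow> (ec^'n) \<times> (ec^'n)"
    and i :: 'n and p :: "ec^'n" and A Abar Ah :: ec
  assumes "e = -1 \<or> e = 1"
    and "conical_lagr_immersion e U phi"
    and "p \<in> U"
    and "covD e phi i (unitsec e phi) p = escV e (emul e ei A) (unitsec e phi p)"
    and "covDbar e phi i (unitsec e phi) p = escV e (emul e ei Abar) (unitsec e phi p)"
    and "emul e ei Ah = ediv e (gam e (dz e i phi p) (phi p)) (gam e (phi p) (phi p))"
  shows "A = (1/2) *\<^sub>R Ah \<and> Abar = (1/2) *\<^sub>R econj Ah"
proof -
  have ee: "e * e = 1" using assms(1) by auto
  obtain L where hasL: "(phi has_derivative L) (at p)"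
    and hol: "\<And>v. L (escN e ei v) = escV e ei (L v)"
    and Gnz: "gam e (phi p) (phi p) \<noteq> 0"
    using assms(2,3) unfolding conical_lagr_immersion_def by blast
  define \<phi> where "\<phi> = phi p"
  define G where "G = gam e \<phi> \<phi>"
  define g where "g = fst G"
  have sG: "snd G = 0" using gam_herm[of e \<phi> \<phi>] unfolding G_def econj_def
    by (metis add.inverse_unique neg_equal_zero snd_conv)
  have Gg: "G = (g, 0)" using sG g_def by (simp add: prod_eq_iff)
  have gnz: "g \<noteq> 0" using Gnz Gg unfolding G_def \<phi>_def by (auto simp: zero_prod_def)
  define k where "k = (\<lambda>x::real. 1 / sqrt \<bar>x\<bar>)"
  define N where "N = k g"
  define dN where "dN = - N / (2*g)"
  define gf where "gf = (\<lambda>q. fst (gam e (phi q) (phi q)))"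
  define g' where "g' = (\<lambda>h. fst (gam e \<phi> (L h) + gam e (L h) \<phi>))"
  have hg: "(gf has_derivative g') (at p)"
    unfolding gf_def g'_def \<phi>_def
    by (rule bounded_linear.has_derivative[OF bounded_linear_fst
          bounded_bilinear.FDERIV[OF bb_gam hasL hasL]])
  have gfp: "gf p = g" by (simp add: gf_def g_def G_def \<phi>_def)
  have hk: "(k has_derivative (\<lambda>x. x * dN)) (at (gf p))"
    using kder[OF gnz] unfolding gfp k_def dN_def N_def has_field_derivative_def
    by (rule has_derivative_eq_rhs) (simp add: fun_eq_iff)
  have hkg: "((\<lambda>q. k (gf q)) has_derivative (\<lambda>h. g' h * dN)) (at p)"
    by (rule has_derivative_compose[OF hg hk])
  have us: "unitsec e phi = (\<lambda>q. k (gf q) *\<^sub>R phi q)"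
    by (auto simp: unitsec_def gnorm_def k_def gf_def)
  define D where "D = (\<lambda>h. N *\<^sub>R L h + (g' h * dN) *\<^sub>R \<phi>)"
  have hD: "(unitsec e phi has_derivative D) (at p)"
    unfolding us D_def N_def \<phi>_def
    using has_derivative_scaleR[OF hkg hasL] gfp by simp
  have fD: "frechet_derivative (unitsec e phi) (at p) = D"
    using frechet_derivative_at[OF hD] by simp
  have fL: "frechet_derivative phi (at p) = L"
    using frechet_derivative_at[OF hasL] by simp
  define a where "a = axis i ((1::real),(0::real))"
  have ba: "axis i ((0::real),(1::real)) = escN e ei a"
    by (auto simp: a_def axis_def escN_def emul_def ei_def vec_eq_iff zero_prod_def)
  define \<Gamma> where "\<Gamma> = gam e (L a) \<phi>"
  have Lb: "L (axis i (0,1)) = escV e ei (L a)" using ba hol by simp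
  have Gb: "gam e (L (axis i (0,1))) \<phi> = emul e ei \<Gamma>"
    by (simp add: Lb gam_escV_left \<Gamma>_def)
  have g'h: "g' h = 2 * fst (gam e (L h) \<phi>)" for h
    by (simp add: g'_def gam_herm[of e \<phi> "L h"] econj_def)
  have ga: "g' a = 2 * fst \<Gamma>" by (simp add: g'h \<Gamma>_def)
  have gb: "g' (axis i (0,1)) = 2 * fst (emul e ei \<Gamma>)" by (simp add: g'h Gb)
  have ee': "emul e (0, e) ei = (1, 0)" using ee by (simp add: emul_def ei_def)
  have dzphi: "dz e i phi p = L a"
    unfolding dz_def fL Lb escV_escV ee' a_def[symmetric]
    by (simp add: escV_def escN_def emul_def vec_eq_iff prod_eq_iff)
  have Ahe: "emul e ei Ah = ediv e \<Gamma> G"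
    using assms(6) unfolding dzphi \<Gamma>_def G_def \<phi>_def .
  have DD: "gam e (D h) \<phi> = N *\<^sub>R gam e (L h) \<phi> + (g' h * dN) *\<^sub>R G" for h
    by (simp add: D_def gam_add_left gam_scaleR_left G_def)
  have X: "gam e (dz e i (unitsec e phi) p) \<phi>
      = (1/2) *\<^sub>R (gam e (D a) \<phi> + emul e (0,e) (gam e (D (axis i (0,1))) \<phi>))"
    unfolding dz_def fD a_def[symmetric]
    by (simp add: gam_add_left gam_scaleR_left gam_escV_left)
  have Xbar: "gam e (dzbar e i (unitsec e phi) p) \<phi>
      = (1/2) *\<^sub>R (gam e (D a) \<phi> - emul e (0,e) (gam e (D (axis i (0,1))) \<phi>))"
    unfolding dzbar_def fD a_def[symmetric]
    by (simp add: gam_diff_left gam_scaleR_left gam_escV_left)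
  have up: "unitsec e phi p = N *\<^sub>R \<phi>"
    by (simp add: us N_def gfp \<phi>_def)
  have c1: "gam e (covD e phi i (unitsec e phi) p) \<phi> = N *\<^sub>R emul e (emul e ei A) G"
    using arg_cong[OF assms(4), of "\<lambda>v. gam e v \<phi>"]
    by (simp add: up escV_scaleR gam_scaleR_left gam_escV_left G_def)
  have c2: "gam e (covDbar e phi i (unitsec e phi) p) \<phi> = N *\<^sub>R emul e (emul e ei Abar) G"
    using arg_cong[OF assms(5), of "\<lambda>v. gam e v \<phi>"]
    by (simp add: up escV_scaleR gam_scaleR_left gam_escV_left G_def)
  have c1': "gam e (covD e phi i (unitsec e phi) p) \<phi>
       = emul e (ediv e (gam e (dz e i (unitsec e phi) p) \<phi>) G) G"
    by (simp add: covD_def gproj_def gam_escV_left G_def \<phi>_def)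
  have c2': "gam e (covDbar e phi i (unitsec e phi) p) \<phi>
       = emul e (ediv e (gam e (dzbar e i (unitsec e phi) p) \<phi>) G) G"
    by (simp add: covDbar_def gproj_def gam_escV_left G_def \<phi>_def)
  have Npos: "N > 0" using gnz by (simp add: N_def k_def)
  have E1: "emul e (ediv e (gam e (dz e i (unitsec e phi) p) \<phi>) G) G = N *\<^sub>R emul e (emul e ei A) G"
    using c1 c1' by simp
  have E2: "emul e (ediv e (gam e (dzbar e i (unitsec e phi) p) \<phi>) G) G = N *\<^sub>R emul e (emul e ei Abar) G"
    using c2 c2' by simp
  note E1' = E1[unfolded X DD ga gb Gb, folded \<Gamma>_def]
  note E2' = E2[unfolded Xbar DD ga gb Gb, folded \<Gamma>_def]
  obtain G1 G2 where GG: "\<Gamma> = (G1, G2)" by fastforce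
  obtain a1 a2 b1 b2 h1 h2 where AA: "A = (a1,a2)" "Abar = (b1,b2)" "Ah = (h1,h2)" by (metis prod.exhaust)
  have R: "a1 = h1/2 \<and> a2 = h2/2 \<and> b1 = h1/2 \<and> b2 = - h2/2"
    using E1' E2' Ahe assms(1) gnz Npos unfolding Gg GG dN_def AA
    apply (simp add: emul_def ediv_def einv_def ei_def econj_def prod_eq_iff)
    apply (elim disjE)
     apply (simp_all add: field_simps power2_eq_square)
    subgoal premises P
    proof -
      have "N * (g * (a2*2 - h2)) = 0" using P by algebra
      then have 1: "a2 * 2 = h2" using P by simp
      have "N * (g * (a2 + b2)) = 0" using P by algebra
      then have "a2 + b2 = 0" using P by simp
      then show ?thesis using 1 by simp
    qed
    subgoal premises P
    proof -
      have "N * (g * (a2 + b2)) = 0" using P by algebra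
      then have "a2 + b2 = 0" using P by simp
      then show ?thesis by simp
    qed
    done
  show ?thesis using R AA by (simp add: econj_def)
qed
end
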